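(* For $\alpha>0$ and $t\in\mathbb{R}$, let $A(\alpha)=\begin{pmatrix}-1&\alpha\\0&-1\end{pmatrix}$ and $B=\begin{pmatrix}t\\1\end{pmatrix}$, and let $X$ solve $A(\alpha)X+XA(\alpha)^*=-BB^*$, with singular values $s_1\ge s_2>0$. Then $X=\frac14\begin{pmatrix}2t^2+2\alpha t+\alpha^2 & \alpha+2t\\ \alpha+2t & 2\end{pmatrix}$, and $$\max_{t\in\mathbb{R}}\frac{s_2}{s_1}=\begin{cases}\alpha^2/4, & 0<\alpha\le 2,\\ 4/\alpha^2, & \alpha\ge 2,\end{cases}$$ with the maximum attained at $t=-\alpha/2$. *)

theory Defs
  imports "HOL-Analysis.Analysis"
begin

definition Amat :: "real \<Rightarrow> real^2^2" where
  "Amat \<alpha> = vector [vector [-1, \<alpha>], vector [0, -1]]"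

definition Bvec :: "real \<Rightarrow> real^1^2" where
  "Bvec t = vector [vector [t], vector [1]]"

text \<open>X solves the Lyapunov equation A X + X A^* = - B B^* (real matrices: A^* = transpose A).\<close>
definition lyap_sol :: "real \<Rightarrow> real \<Rightarrow> real^2^2 \<Rightarrow> bool" where
  "lyap_sol \<alpha> t X \<longleftrightarrow>
     Amat \<alpha> ** X + X ** transpose (Amat \<alpha>) = - (Bvec t ** transpose (Bvec t))"

definition singular_values :: "real^'n^'m \<Rightarrow> real set" where
  "singular_values M = {s. s \<ge> 0 \<and> (\<exists>v. v \<noteq> 0 \<and> (transpose M ** M) *v v = (s^2) *\<^sub>R v)}"

definition s_max :: "real^'n^'m \<Rightarrow> real" where
  "s_max M = Max (singular_values M)"

definition s_min :: "real^'n^'m \<Rightarrow> real" where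
  "s_min M = Min (singular_values M)"

end

theory Submission
  imports Defs
begin

lemma comp: fixes v :: "real^2"
  shows "((transpose (vector [vector [p,q],vector [q,r]] :: real^2^2) ** vector [vector [p,q],vector [q,r]]) *v v = c *\<^sub>R v)
   \<longleftrightarrow> ((p*p+q*q)*(v$1) + (p*q+q*r)*(v$2) = c*(v$1) \<and> (p*q+q*r)*(v$1) + (q*q+r*r)*(v$2) = c*(v$2))"
  by (simp add: vec_eq_iff forall_2 matrix_vector_mult_def matrix_matrix_mult_def sum_2 transpose_def vector_2 algebra_simps)

lemma lyap: "lyap_sol a t X \<longleftrightarrow> X = (1/4) *\<^sub>R vector [vector [2*t^2 + 2*a*t + a^2, a + 2*t], vector [a + 2*t, 2]]"
  unfolding lyap_sol_def Amat_def Bvec_def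
  apply (simp add: vec_eq_iff forall_2 matrix_vector_mult_def matrix_matrix_mult_def sum_2 transpose_def vector_2 algebra_simps)
  apply (rule iffI)
   apply (elim conjE)
  subgoal premises h
  proof -
    have h22: "X$2$2 = 1/2" using h by simp
    have "2*X$1$2 = t + a*X$2$2" using h by simp
    hence h12: "2*X$1$2 = t + a/2" using h22 by simp
    have "2*X$1$1 = t*t + a*(2*X$1$2)" using h by (simp add: algebra_simps)
    also have "\<dots> = t*t + a*(t+a/2)" using h12 by simp
    finally have "2*X$1$1 = t*t + a*(t+a/2)" .
    then show ?thesis using h12 h by (simp add: power2_eq_square algebra_simps)
  qed
  apply (elim conjE)
  subgoal premises h
  proof -
    have a1: "X$2$2 = 1/2" using h by simp
    have a2: "X$1$2 = (a + t*2)/4" using h by simp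
    have a3: "X$2$1 = (a + t*2)/4" using h by simp
    have a4: "X$1$1 = (a * a + (a * (t * 2) + t * (t * 2)))/4" using h by (simp add: power2_eq_square)
    show ?thesis unfolding a1 a2 a3 a4 by (simp add: field_simps)
  qed
  done

lemma Xform: "(1/4) *\<^sub>R vector [vector [2*t^2 + 2*a*t + a^2, a + 2*t], vector [a + 2*t, 2]]
   = (vector [vector [(2*t^2 + 2*a*t + a^2)/4, (a + 2*t)/4], vector [(a + 2*t)/4, 1/2]] :: real^2^2)"
  by (simp add: vec_eq_iff forall_2 vector_2)

lemma eig_char:
  fixes p q r z x y :: real
  assumes p: "p > 0" and d: "p*r > q^2" and z: "z \<ge> 0" and nz: "x \<noteq> 0 \<or> y \<noteq> 0"
    and e1: "(p*p+q*q)*x + (p*q+q*r)*y = z^2*x" and e2: "(p*q+q*r)*x + (q*q+r*r)*y = z^2*y"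
  shows "z^2 - (p+r)*z + (p*r-q^2) = 0"
proof -
  define u where "u = (p+z)*x + q*y"
  define w where "w = q*x + (r+z)*y"
  have f1: "(p-z)*u + q*w = 0" using e1 unfolding u_def w_def by (simp add: power2_eq_square algebra_simps)
  have f2: "q*u + (r-z)*w = 0" using e2 unfolding u_def w_def by (simp add: power2_eq_square algebra_simps)
  show ?thesis
  proof (cases "u = 0 \<and> w = 0")
    case True
    have "x*u + y*w = 0" using True by simp
    hence g: "p*x^2 + 2*q*x*y + r*y^2 = - z*(x^2+y^2)" unfolding u_def w_def by (simp add: power2_eq_square algebra_simps)
    have "p*(p*x^2 + 2*q*x*y + r*y^2) = (p*x+q*y)^2 + (p*r-q^2)*y^2" by (simp add: power2_eq_square algebra_simps)
    moreover have "(p*x+q*y)^2 + (p*r-q^2)*y^2 > 0"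
    proof (cases "y = 0")
      case True then have "x \<noteq> 0" using nz by simp
      then show ?thesis using True p by simp
    next
      case False then show ?thesis using d by (simp add: add_nonneg_pos)
    qed
    ultimately have "p*x^2 + 2*q*x*y + r*y^2 > 0" using p by (metis zero_less_mult_pos)
    moreover have "z*(x^2+y^2) \<ge> 0" using z by simp
    ultimately show ?thesis using g by linarith
  next
    case False
    have "((p-z)*(r-z) - q^2)*u = 0" using f1 f2
      by (smt (verit) mult_left_cancel mult.commute mult.left_commute power2_eq_square right_diff_distrib left_diff_distrib)
    moreover have "((p-z)*(r-z) - q^2)*w = 0"
    proof -
      have "((p-z)*(r-z) - q^2)*w = (p-z)*(q*u + (r-z)*w) - q*((p-z)*u + q*w)" by (simp add: power2_eq_square algebra_simps)
      thus ?thesis using f1 f2 by simp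
    qed
    ultimately have "(p-z)*(r-z) - q^2 = 0" using False by auto
    thus ?thesis by (simp add: power2_eq_square algebra_simps)
  qed
qed

lemma eig_exist:
  fixes p q r z :: real
  assumes ch: "z^2 - (p+r)*z + (p*r-q^2) = 0"
  shows "\<exists>x y. (x \<noteq> 0 \<or> y \<noteq> 0) \<and> (p*p+q*q)*x + (p*q+q*r)*y = z^2*x \<and> (p*q+q*r)*x + (q*q+r*r)*y = z^2*y"
proof -
  have "\<exists>x y. (x \<noteq> 0 \<or> y \<noteq> 0) \<and> p*x + q*y = z*x \<and> q*x + r*y = z*y"
  proof (cases "q = 0 \<and> z = p")
    case True then show ?thesis by (intro exI[of _ 1] exI[of _ 0]) simp
  next
    case False
    have 1: "q \<noteq> 0 \<or> z - p \<noteq> 0" using False by auto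
    have 2: "p*q + q*(z-p) = z*q" by (simp add: algebra_simps)
    have 3: "q*q + r*(z-p) = z*(z-p)" using ch by (simp add: power2_eq_square algebra_simps)
    show ?thesis using 1 2 3 by blast
  qed
  then obtain x y where h: "x \<noteq> 0 \<or> y \<noteq> 0" "p*x + q*y = z*x" "q*x + r*y = z*y" by blast
  have "(p*p+q*q)*x + (p*q+q*r)*y = p*(p*x+q*y) + q*(q*x+r*y)" by (simp add: algebra_simps)
  also have "\<dots> = p*(z*x) + q*(z*y)" using h(2,3) by simp
  also have "\<dots> = z*(p*x+q*y)" by (simp add: algebra_simps)
  also have "\<dots> = z^2*x" using h(2) by (simp add: power2_eq_square)
  finally have 1: "(p*p+q*q)*x + (p*q+q*r)*y = z^2*x" .
  have "(p*q+q*r)*x + (q*q+r*r)*y = q*(p*x+q*y) + r*(q*x+r*y)" by (simp add: algebra_simps)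
  also have "\<dots> = q*(z*x) + r*(z*y)" using h(2,3) by simp
  also have "\<dots> = z*(q*x+r*y)" by (simp add: algebra_simps)
  also have "\<dots> = z^2*y" using h(3) by (simp add: power2_eq_square)
  finally have 2: "(p*q+q*r)*x + (q*q+r*r)*y = z^2*y" .
  show ?thesis using h(1) 1 2 by blast
qed

lemma sv:
  fixes p q r :: real
  assumes p: "p > 0" and d: "p*r > q^2"
  shows "singular_values (vector [vector [p,q],vector [q,r]] :: real^2^2) = {z. z \<ge> 0 \<and> z^2 - (p+r)*z + (p*r-q^2) = 0}"
proof (rule set_eqI, rule iffI)
  fix z assume "z \<in> singular_values (vector [vector [p,q],vector [q,r]] :: real^2^2)"
  then obtain v :: "real^2" where z: "z \<ge> 0" "v \<noteq> 0"
     "(p*p+q*q)*(v$1) + (p*q+q*r)*(v$2) = z^2*(v$1)" "(p*q+q*r)*(v$1) + (q*q+r*r)*(v$2) = z^2*(v$2)"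
    unfolding singular_values_def comp by blast
  have "v$1 \<noteq> 0 \<or> v$2 \<noteq> 0" using z(2) by (auto simp: vec_eq_iff forall_2)
  from eig_char[OF p d z(1) this z(3) z(4)] z(1) show "z \<in> {z. z \<ge> 0 \<and> z^2 - (p+r)*z + (p*r-q^2) = 0}" by simp
next
  fix z assume "z \<in> {z. z \<ge> 0 \<and> z^2 - (p+r)*z + (p*r-q^2) = 0}"
  hence z: "z \<ge> 0" "z^2 - (p+r)*z + (p*r-q^2) = 0" by auto
  obtain x y where h: "x \<noteq> 0 \<or> y \<noteq> 0" "(p*p+q*q)*x + (p*q+q*r)*y = z^2*x" "(p*q+q*r)*x + (q*q+r*r)*y = z^2*y"
    using eig_exist[OF z(2)] by blast
  define v :: "real^2" where "v = vector [x,y]"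
  have "v \<noteq> 0" using h(1) by (auto simp: v_def vec_eq_iff forall_2 vector_2)
  moreover have "(p*p+q*q)*(v$1) + (p*q+q*r)*(v$2) = z^2*(v$1) \<and> (p*q+q*r)*(v$1) + (q*q+r*r)*(v$2) = z^2*(v$2)"
    using h by (simp add: v_def vector_2)
  ultimately show "z \<in> singular_values (vector [vector [p,q],vector [q,r]] :: real^2^2)"
    unfolding singular_values_def comp using z(1) by blast
qed

lemma roots:
  fixes T D :: real
  assumes T: "T > 0" and D: "D > 0" and disc: "T^2 \<ge> 4*D"
  defines "lo \<equiv> (T - sqrt (T^2 - 4*D))/2" and "hi \<equiv> (T + sqrt (T^2 - 4*D))/2"
  shows "{z. z \<ge> 0 \<and> z^2 - T*z + D = 0} = {lo, hi}" and "0 < lo" and "lo \<le> hi" and "lo*hi = D" and "lo + hi = T"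
proof -
  define S where "S = sqrt (T^2 - 4*D)"
  have S0: "S \<ge> 0" and S2: "S^2 = T^2 - 4*D" using disc by (auto simp: S_def)
  have "S < T"
  proof -
    have "S^2 < T^2" using S2 D by simp
    thus ?thesis using S0 T by (smt (verit) power_mono)
  qed
  show lohi: "lo*hi = D" unfolding lo_def hi_def S_def[symmetric] using S2 by (simp add: field_simps power2_eq_square)
  show "lo + hi = T" unfolding lo_def hi_def by (simp add: field_simps)
  show "0 < lo" unfolding lo_def S_def[symmetric] using \<open>S < T\<close> by simp
  show "lo \<le> hi" unfolding lo_def hi_def S_def[symmetric] using S0 by simp
  have fac: "z^2 - T*z + D = (z - lo)*(z - hi)" for z
    unfolding lo_def hi_def S_def[symmetric] using S2 by (simp add: field_simps power2_eq_square)
  have "0 \<le> lo" unfolding lo_def S_def[symmetric] using \<open>S < T\<close> by simp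
  moreover have "0 \<le> hi" unfolding hi_def S_def[symmetric] using S0 T by simp
  ultimately show "{z. z \<ge> 0 \<and> z^2 - T*z + D = 0} = {lo, hi}" unfolding fac by auto
qed

lemma ratio_le:
  fixes r c :: real
  assumes "0 < r" "r \<le> 1" "0 < c" "c \<le> 1" "r/(1+r)^2 \<le> c/(1+c)^2"
  shows "r \<le> c"
proof (rule ccontr)
  assume "\<not> r \<le> c"
  hence rc: "c < r" by simp
  have "r*(1+c)^2 \<le> c*(1+r)^2" using assms by (simp add: field_simps)
  hence "(r-c)*(1-r*c) \<le> 0" by (simp add: power2_eq_square algebra_simps)
  moreover have "r*c < 1"
  proof -
    have "r*c \<le> 1*c" using assms by (intro mult_right_mono) auto
    thus ?thesis using rc assms by linarith
  qed
  ultimately show False using rc by (simp add: mult_le_0_iff)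
qed


lemma per_t:
  fixes a t :: real
  assumes a: "a > 0"
  defines "X \<equiv> (1/4) *\<^sub>R vector [vector [2*t^2 + 2*a*t + a^2, a + 2*t], vector [a + 2*t, 2]] :: real^2^2"
  defines "c \<equiv> (if a \<le> 2 then a^2/4 else 4/a^2)"
  shows "s_max X \<ge> s_min X \<and> s_min X > 0 \<and> s_min X / s_max X \<le> c \<and> (t = -a/2 \<longrightarrow> s_min X / s_max X = c)"
proof -
  define P where "P = 2*t^2 + 2*a*t + a^2"
  define p where "p = P/4"
  define q where "q = (a + 2*t)/4"
  define r :: real where "r = 1/2"
  have Xe: "X = vector [vector [p,q],vector [q,r]]" unfolding X_def Xform p_def q_def r_def P_def ..
  have Psq: "2*P - a^2 = (a+2*t)^2" unfolding P_def by (simp add: power2_eq_square algebra_simps)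
  have "(a+2*t)^2 \<ge> 0" by simp
  hence Pge: "P \<ge> a^2/2" using Psq by linarith
  have a2: "a^2 > 0" using a by simp
  have p0: "p > 0" unfolding p_def using Pge a2 by linarith
  have D: "p*r - q^2 = a^2/16" unfolding p_def q_def r_def using Psq by (simp add: power2_eq_square field_simps)
  have d: "p*r > q^2" using D a2 by linarith
  define T where "T = p + r"
  define Dv where "Dv = p*r - q^2"
  have T0: "T > 0" unfolding T_def r_def using p0 by simp
  have D0: "Dv > 0" unfolding Dv_def using D a2 by linarith
  have TP: "T = (P+2)/4" unfolding T_def p_def r_def by simp
  have "P + 2 \<ge> 2*a"
  proof -
    have "a^2/2 + 2 - 2*a = (a-2)^2/2" by (simp add: power2_eq_square field_simps)
    moreover have "(a-2)^2/2 \<ge> 0" by simp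
    ultimately show ?thesis using Pge by linarith
  qed
  hence "(P+2)^2 \<ge> (2*a)^2" using a by (intro power_mono) auto
  hence disc: "T^2 \<ge> 4*Dv" unfolding TP Dv_def D by (simp add: power2_eq_square field_simps)
  define lo where "lo = (T - sqrt (T^2 - 4*Dv))/2"
  define hi where "hi = (T + sqrt (T^2 - 4*Dv))/2"
  note R = roots[OF T0 D0 disc, folded lo_def hi_def]
  have SV: "singular_values X = {lo, hi}" unfolding Xe sv[OF p0 d] using R(1) unfolding T_def Dv_def by simp
  have smax: "s_max X = hi" unfolding s_max_def SV using R(3) by simp
  have smin: "s_min X = lo" unfolding s_min_def SV using R(3) by simp
  have lo0: "lo > 0" and hi0: "hi > 0" using R(2,3) by auto
  define rr where "rr = lo/hi"
  have rr0: "rr > 0" "rr \<le> 1" unfolding rr_def using lo0 hi0 R(3) by auto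
  have rrid: "rr/(1+rr)^2 = Dv/T^2" unfolding rr_def R(4)[symmetric] R(5)[symmetric] using hi0
    by (simp add: field_simps power2_eq_square)
  have c0: "c > 0" "c \<le> 1"
  proof -
    show "c > 0" unfolding c_def using a2 by simp
    show "c \<le> 1"
    proof (cases "a \<le> 2")
      case True
      hence "a^2 \<le> 2^2" using a by (intro power_mono) auto
      thus ?thesis unfolding c_def using True by simp
    next
      case False
      hence "2^2 \<le> a^2" by (intro power_mono) auto
      thus ?thesis unfolding c_def using False by simp
    qed
  qed
  have cid: "c/(1+c)^2 = 4*a^2/(4+a^2)^2"
    unfolding c_def using a2 by (auto simp: field_simps power2_eq_square)
  have P2: "P + 2 > 0" using Pge a2 by linarith
  have DT1: "Dv/T^2 = a^2/(P+2)^2" unfolding TP Dv_def D using P2 by (simp add: field_simps power2_eq_square)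
  have DT2: "4*a^2/(2*(P+2))^2 = a^2/(P+2)^2"
  proof -
    have "(2*(P+2))^2 = 4*(P+2)^2" by (simp only: power_mult_distrib) simp
    thus ?thesis by simp
  qed
  have DT: "Dv/T^2 = 4*a^2/(2*(P+2))^2" using DT1 DT2 by simp
  have le1: "4 + a^2 \<le> 2*(P+2)" using Pge by simp
  have "(4+a^2)^2 \<le> (2*(P+2))^2" using le1 a2 by (intro power_mono) auto
  moreover have "0 < (2*(P+2))^2 * (4+a^2)^2" proof (intro mult_pos_pos)
    show "0 < (2*(P+2))^2" using P2 by simp
    have "0 < 4 + a^2" using a2 by linarith
    thus "0 < (4+a^2)^2" by simp
  qed
  moreover have "0 \<le> 4*a^2" by simp
  ultimately have "4*a^2/(2*(P+2))^2 \<le> 4*a^2/(4+a^2)^2" using divide_left_mono by blast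
  hence "rr/(1+rr)^2 \<le> c/(1+c)^2" unfolding rrid cid DT .
  hence le: "rr \<le> c" using ratio_le rr0 c0 by blast
  have eq: "rr = c" if t: "t = -a/2"
  proof -
    have "P = a^2/2" unfolding P_def t by (simp add: power2_eq_square field_simps)
    hence "rr/(1+rr)^2 = c/(1+c)^2" unfolding rrid cid DT by (simp add: field_simps power2_eq_square)
    hence "c \<le> rr" using ratio_le rr0 c0 by (metis order_refl)
    thus ?thesis using le by simp
  qed
  show ?thesis unfolding smax smin using R(3) lo0 le eq rr_def by auto
qed


theorem mainTheorem5:
  fixes \<alpha> :: real
  assumes "\<alpha> > 0"
  shows "(\<forall>t. \<exists>X. lyap_sol \<alpha> t X)
   \<and> (\<forall>t X. lyap_sol \<alpha> t X \<longrightarrow>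
        X = (1/4) *\<^sub>R vector [vector [2*t^2 + 2*\<alpha>*t + \<alpha>^2, \<alpha> + 2*t],
                                   vector [\<alpha> + 2*t, 2]]
        \<and> s_max X \<ge> s_min X \<and> s_min X > 0)
   \<and> (\<forall>t X. lyap_sol \<alpha> t X \<longrightarrow>
        s_min X / s_max X \<le> (if \<alpha> \<le> 2 then \<alpha>^2/4 else 4/\<alpha>^2))
   \<and> (\<exists>X. lyap_sol \<alpha> (-\<alpha>/2) X \<and>
        s_min X / s_max X = (if \<alpha> \<le> 2 then \<alpha>^2/4 else 4/\<alpha>^2))"
  using per_t[OF assms] unfolding lyap by blast

end
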